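(* Any GET operation by client $c$ on a key $k$ of partition $p$ in which the client sends $hwv = hwm[:,p]$ (its current row for partition $p$ of the highest-write matrix) satisfies per-key read-your-write consistency: if the operation is issued at time $t$ and served by server $s$, which reads the value of $k$ at time $t'$, then every $w\in ClientWrites(c,k,t)$ is included in $CommittedWrites(s,k,t')$.
   Context: System model. Data is replicated in $D$ datacenters and split into $P$ partitions. In each datacenter $d$, each partition is replicated by a Raft group with a leader $L_d$; Raft guarantees that all members of a group commit the same totally ordered sequence of log entries, each with a log index, in increasing index order. Every version $v$ of a key carries a value, an originating datacenter $v.dc\_id$, the log index $idx(v)$ it received in the Raft log of its originating datacenter, and a hybrid logical clock (HLC) timestamp $v.t=\langle l,c\rangle$; HLC timestamps are compared lexicographically. Writes committed in the group of datacenter $d$ that originated at $d$ are forwarded, in commit order, over FIFO channels to the leaders of the same partition in every other datacenter, which append them (carrying their original index $idx(v)$) to their own Raft logs. Each server $s$ keeps a vector $sv$ of length $D$, initially zero; when $s$ commits a version $v$ it sets $sv[v.dc\_id]:=idx(v)$ and adds $v$ to the version chain of its key. Client protocol. Each client $c$ keeps $D\times P$ matrices $hrm$ (highest read) and $hwm$ (highest write), initially zero, and HLC timestamps $dt_r,dt_w$, initially zero. GET of key $k$ in partition $p$: the client sends vectors $hrv,hwv$ of length $D$ (each either the zero vector or $hrm[:,p]$, resp. $hwm[:,p]$); the server blocks while there is $i$ with $sv[i]<hrv[i]$ or $sv[i]<hwv[i]$; it then returns the version $v$ of $k$ in its version chain with the largest timestamp, together with $v.dc\_id$, $sv[v.dc\_id]$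 and $v.t$; the client sets $hrm[v.dc\_id,p]:=\max(hrm[v.dc\_id,p],sv[v.dc\_id])$ and $dt_r:=\max(dt_r,v.t)$. PUT of key $k$ in partition $p$ at leader $L_d$: the client sends a dependency timestamp $dt$ (one of $0$, $dt_r$, $dt_w$, $\max(dt_r,dt_w)$); the leader updates its HLC $\langle l,c\rangle$ with $dt$ by the rule: $l':=l$; $l:=\max(l',pt,dt.l)$ where $pt$ is its physical clock; then $c:=\max(c,dt.c)+1$ if $l=l'=dt.l$, else $c:=c+1$ if $l=l'$, else $c:=dt.c+1$ if $l=dt.l$, else $c:=0$; it timestamps the new version with the updated HLC value $t$ and $dc\_id=d$, appends it to the Raft log, and after commit replies with $d$, $sv[d]$ and $t$; the client sets $hwm[d,p]:=\max(hwm[d,p],sv[d])$ and $dt_w:=\max(dt_w,t)$. Definitions. $CommittedWrites(s,k,t)$ is the ordered sequence of all writes of key $k$ committed at server $s$ by time $t$; $ClientWrites(c,k,t)$ is the ordered sequence of all writes of $k$ done by client $c$ by time $t$; $ClientReads(c,k,t)$ is the set of writes whose value of $k$ has been read by client $c$ by time $t$. *)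

theory Defs
  imports Main "HOL-Library.Product_Lexorder"
begin

(* HLC timestamps <l,c>, compared lexicographically (Product_Lexorder). *)
type_synonym hlc = "nat \<times> nat"

(* A version of a key: key, value, originating datacenter, log index in the
   Raft log of its originating datacenter, HLC timestamp. *)
record ('k, 'v) version =
  vkey :: 'k
  vval :: 'v
  vdc  :: nat
  vidx :: nat
  vts  :: hlc

(* A server is identified by (datacenter, partition, replica). *)
type_synonym server = "nat \<times> nat \<times> nat"

(* Fixed system parameters: D datacenters 0..<D, P partitions 0..<P,
   R replicas 0..<R per Raft group, partition of each key, and the leader
   replica of the Raft group (d,p). *)
record 'k config =
  nD  :: nat
  nP  :: nat
  nR  :: nat
  pk  :: "'k \<Rightarrow> nat"
  ldr :: "nat \<Rightarrow> nat \<Rightarrow> nat"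

record ('c, 'k, 'v) sstate =
  glog      :: "nat \<Rightarrow> nat \<Rightarrow> ('k, 'v) version list"
      (* Raft log (appended entries) of the group of partition p in datacenter d *)
  committed :: "server \<Rightarrow> ('k, 'v) version list"
  sv        :: "server \<Rightarrow> nat \<Rightarrow> nat"
  chan      :: "nat \<Rightarrow> nat \<Rightarrow> nat \<Rightarrow> ('k, 'v) version list"
      (* FIFO channel from leader of (d,p) to leader of (d',p): chan d d' p *)
  lhlc      :: "nat \<Rightarrow> nat \<Rightarrow> hlc"        (* HLC of leader L_d of partition p *)
  hrm       :: "'c \<Rightarrow> nat \<Rightarrow> nat \<Rightarrow> nat"
  hwm       :: "'c \<Rightarrow> nat \<Rightarrow> nat \<Rightarrow> nat"
  dtr       :: "'c \<Rightarrow> hlc"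
  dtw       :: "'c \<Rightarrow> hlc"
  cwrites   :: "'c \<Rightarrow> ('k, 'v) version list"  (* completed writes of a client, in order *)
  creads    :: "'c \<Rightarrow> ('k, 'v) version set"
  pputs     :: "('c \<times> ('k, 'v) version) set"  (* PUTs appended but not yet replied *)
  pgets     :: "nat \<Rightarrow> ('c \<times> server \<times> 'k \<times> (nat \<Rightarrow> nat) \<times> (nat \<Rightarrow> nat)) option"
      (* pending GET requests by request id: client, server, key, hrv, hwv *)
  used      :: "nat set"   (* request ids already used *)

definition init :: "('c, 'k, 'v) sstate" where
  "init = \<lparr> glog = (\<lambda>_ _. []), committed = (\<lambda>_. []), sv = (\<lambda>_ _. 0),
     chan = (\<lambda>_ _ _. []), lhlc = (\<lambda>_ _. (0, 0)), hrm = (\<lambda>_ _ _. 0), hwm = (\<lambda>_ _ _. 0),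
     dtr = (\<lambda>_. (0, 0)), dtw = (\<lambda>_. (0, 0)), cwrites = (\<lambda>_. []), creads = (\<lambda>_. {}),
     pputs = {}, pgets = (\<lambda>_. None), used = {} \<rparr>"

(* HLC update of a leader with clock value lc, physical clock pt and dependency dt *)
definition hlc_update :: "hlc \<Rightarrow> nat \<Rightarrow> hlc \<Rightarrow> hlc" where
  "hlc_update lc pt dt =
     (let l' = fst lc; c = snd lc; l = max (max l' pt) (fst dt) in
      (l, if l = l' \<and> l' = fst dt then max c (snd dt) + 1
          else if l = l' then c + 1
          else if l = fst dt then snd dt + 1
          else 0))"

datatype ('c, 'k, 'v) event =
    Skip
  | PutReq 'c nat 'k 'v hlc nat
      (* client, datacenter d of leader L_d, key, value, dependency dt, physical clock pt *)
  | PutDone 'c "('k, 'v) version"       (* leader's reply after commit, received by client *)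
  | Commit server                       (* server commits next entry of its group's log *)
  | Recv nat nat nat                    (* leader of (d',p) appends head of chan d d' p *)
  | GetReq 'c server 'k "nat \<Rightarrow> nat" "nat \<Rightarrow> nat" nat
      (* client issues GET of key to server with vectors hrv, hwv and request id *)
  | GetServe nat "('k, 'v) version option"
      (* server serves (reads) pending GET with given id, returning the version read *)

inductive step :: "'k config \<Rightarrow> ('c, 'k, 'v) sstate \<Rightarrow> ('c, 'k, 'v) event \<Rightarrow> ('c, 'k, 'v) sstate \<Rightarrow> bool"
  for cf where
  skip: "step cf \<sigma> Skip \<sigma>"
| put: "\<lbrakk> d < nD cf; p = pk cf k;
          dt \<in> {(0, 0), dtr \<sigma> c, dtw \<sigma> c, max (dtr \<sigma> c) (dtw \<sigma> c)};
          ts = hlc_update (lhlc \<sigma> d p) pt dt;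
          v = \<lparr> vkey = k, vval = x, vdc = d, vidx = Suc (length (glog \<sigma> d p)), vts = ts \<rparr> \<rbrakk>
        \<Longrightarrow> step cf \<sigma> (PutReq c d k x dt pt)
              (\<sigma>\<lparr> glog := (glog \<sigma>)(d := (glog \<sigma> d)(p := glog \<sigma> d p @ [v])),
                  lhlc := (lhlc \<sigma>)(d := (lhlc \<sigma> d)(p := ts)),
                  pputs := insert (c, v) (pputs \<sigma>) \<rparr>)"
| putdone: "\<lbrakk> (c, v) \<in> pputs \<sigma>; d = vdc v; p = pk cf (vkey v); L = (d, p, ldr cf d p);
              v \<in> set (committed \<sigma> L) \<rbrakk>
        \<Longrightarrow> step cf \<sigma> (PutDone c v)
              (\<sigma>\<lparr> hwm := (hwm \<sigma>)(c := (hwm \<sigma> c)(d := (hwm \<sigma> c d)(p := max (hwm \<sigma> c d p) (sv \<sigma> L d)))),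
                  dtw := (dtw \<sigma>)(c := max (dtw \<sigma> c) (vts v)),
                  cwrites := (cwrites \<sigma>)(c := cwrites \<sigma> c @ [v]),
                  pputs := pputs \<sigma> - {(c, v)} \<rparr>)"
| commit: "\<lbrakk> s = (d, p, r); d < nD cf; p < nP cf; r < nR cf;
             length (committed \<sigma> s) < length (glog \<sigma> d p);
             v = glog \<sigma> d p ! length (committed \<sigma> s) \<rbrakk>
        \<Longrightarrow> step cf \<sigma> (Commit s)
              (\<sigma>\<lparr> committed := (committed \<sigma>)(s := committed \<sigma> s @ [v]),
                  sv := (sv \<sigma>)(s := (sv \<sigma> s)(vdc v := vidx v)),
                  chan := (if r = ldr cf d p \<and> vdc v = d
                           then (\<lambda>a b q. if a = d \<and> b < nD cf \<and> b \<noteq> d \<and> q = p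
                                         then chan \<sigma> a b q @ [v] else chan \<sigma> a b q)
                           else chan \<sigma>) \<rparr>)"
| recv: "chan \<sigma> a b p = v # rest
        \<Longrightarrow> step cf \<sigma> (Recv a b p)
              (\<sigma>\<lparr> chan := (chan \<sigma>)(a := (chan \<sigma> a)(b := (chan \<sigma> a b)(p := rest))),
                  glog := (glog \<sigma>)(b := (glog \<sigma> b)(p := glog \<sigma> b p @ [v])) \<rparr>)"
| getreq: "\<lbrakk> s = (d, p, r); d < nD cf; r < nR cf; p = pk cf k;
             hrv \<in> {(\<lambda>_. 0), (\<lambda>i. hrm \<sigma> c i p)};
             hwv \<in> {(\<lambda>_. 0), (\<lambda>i. hwm \<sigma> c i p)};
             rid \<notin> used \<sigma> \<rbrakk>
        \<Longrightarrow> step cf \<sigma> (GetReq c s k hrv hwv rid)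
              (\<sigma>\<lparr> pgets := (pgets \<sigma>)(rid := Some (c, s, k, hrv, hwv)),
                  used := insert rid (used \<sigma>) \<rparr>)"
| getserve_none: "\<lbrakk> pgets \<sigma> rid = Some (c, s, k, hrv, hwv);
             \<forall>i < nD cf. hrv i \<le> sv \<sigma> s i \<and> hwv i \<le> sv \<sigma> s i;
             \<forall>u \<in> set (committed \<sigma> s). vkey u \<noteq> k \<rbrakk>
        \<Longrightarrow> step cf \<sigma> (GetServe rid None) (\<sigma>\<lparr> pgets := (pgets \<sigma>)(rid := None) \<rparr>)"
| getserve_some: "\<lbrakk> pgets \<sigma> rid = Some (c, s, k, hrv, hwv);
             \<forall>i < nD cf. hrv i \<le> sv \<sigma> s i \<and> hwv i \<le> sv \<sigma> s i;
             v \<in> set (committed \<sigma> s); vkey v = k;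
             \<forall>u \<in> set (committed \<sigma> s). vkey u = k \<longrightarrow> vts u \<le> vts v;
             p = pk cf k \<rbrakk>
        \<Longrightarrow> step cf \<sigma> (GetServe rid (Some v))
              (\<sigma>\<lparr> pgets := (pgets \<sigma>)(rid := None),
                  hrm := (hrm \<sigma>)(c := (hrm \<sigma> c)(vdc v := (hrm \<sigma> c (vdc v))(p :=
                            max (hrm \<sigma> c (vdc v) p) (sv \<sigma> s (vdc v))))),
                  dtr := (dtr \<sigma>)(c := max (dtr \<sigma> c) (vts v)),
                  creads := (creads \<sigma>)(c := insert v (creads \<sigma> c)) \<rparr>)"

definition exec :: "'k config \<Rightarrow> (nat \<Rightarrow> ('c, 'k, 'v) sstate) \<Rightarrow> (nat \<Rightarrow> ('c, 'k, 'v) event) \<Rightarrow> bool" where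
  "exec cf \<sigma> evs \<longleftrightarrow> \<sigma> 0 = init \<and> (\<forall>n. step cf (\<sigma> n) (evs n) (\<sigma> (Suc n)))"

definition CommittedWrites :: "(nat \<Rightarrow> ('c, 'k, 'v) sstate) \<Rightarrow> server \<Rightarrow> 'k \<Rightarrow> nat \<Rightarrow> ('k, 'v) version list" where
  "CommittedWrites \<sigma> s k t = filter (\<lambda>v. vkey v = k) (committed (\<sigma> t) s)"

definition ClientWrites :: "(nat \<Rightarrow> ('c, 'k, 'v) sstate) \<Rightarrow> 'c \<Rightarrow> 'k \<Rightarrow> nat \<Rightarrow> ('k, 'v) version list" where
  "ClientWrites \<sigma> c k t = filter (\<lambda>v. vkey v = k) (cwrites (\<sigma> t) c)"

definition ClientReads :: "(nat \<Rightarrow> ('c, 'k, 'v) sstate) \<Rightarrow> 'c \<Rightarrow> 'k \<Rightarrow> nat \<Rightarrow> ('k, 'v) version set" where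
  "ClientReads \<sigma> c k t = {v \<in> creads (\<sigma> t) c. vkey v = k}"

end

theory Submission
  imports Defs "HOL-Library.Sublist"
begin

definition fl :: "nat \<Rightarrow> ('k,'v) version list \<Rightarrow> ('k,'v) version list" where
  "fl i xs = filter (\<lambda>v. vdc v = i) xs"

definition srt :: "('k,'v) version list \<Rightarrow> bool" where
  "srt xs = sorted_wrt (\<lambda>u v. vidx u < vidx v) xs"

definition lastidx :: "('k,'v) version list \<Rightarrow> nat" where
  "lastidx xs = (if xs = [] then 0 else vidx (last xs))"

definition inv :: "'k config \<Rightarrow> ('c,'k,'v) sstate \<Rightarrow> bool" where
  "inv cf \<sigma> \<longleftrightarrow>
    (\<forall>d p r. prefix (committed \<sigma> (d,p,r)) (glog \<sigma> d p)) \<and>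
    (\<forall>a b p. b < nD cf \<longrightarrow> b \<noteq> a \<longrightarrow>
        fl a (glog \<sigma> b p) @ chan \<sigma> a b p = fl a (committed \<sigma> (a,p,ldr cf a p))) \<and>
    (\<forall>a b p. (nD cf \<le> b \<or> b = a) \<longrightarrow> chan \<sigma> a b p = []) \<and>
    (\<forall>i p. srt (fl i (glog \<sigma> i p))) \<and>
    (\<forall>i p. \<forall>v\<in>set (glog \<sigma> i p). vdc v = i \<longrightarrow> vidx v \<le> length (glog \<sigma> i p)) \<and>
    (\<forall>s i. sv \<sigma> s i = lastidx (fl i (committed \<sigma> s))) \<and>
    (\<forall>c. \<forall>w\<in>set (cwrites \<sigma> c). w \<in> set (glog \<sigma> (vdc w) (pk cf (vkey w))) \<and> 0 < vidx w
        \<and> vidx w \<le> hwm \<sigma> c (vdc w) (pk cf (vkey w)) \<and> vdc w < nD cf) \<and>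
    (\<forall>(c,v)\<in>pputs \<sigma>. v \<in> set (glog \<sigma> (vdc v) (pk cf (vkey v))) \<and> 0 < vidx v \<and> vdc v < nD cf)"

lemma inv_init: "inv cf init"
  by (simp add: inv_def init_def fl_def srt_def lastidx_def)

lemma fl_append[simp]: "fl i (xs @ ys) = fl i xs @ fl i ys"
  by (simp add: fl_def)
lemma fl_single[simp]: "fl i [v] = (if vdc v = i then [v] else [])"
  by (simp add: fl_def)
lemma set_fl[simp]: "set (fl i xs) = {v \<in> set xs. vdc v = i}"
  by (auto simp: fl_def)

lemma srt_prefix: "srt ys \<Longrightarrow> prefix xs ys \<Longrightarrow> srt xs"
  unfolding srt_def by (metis prefixE sorted_wrt_append)

lemma srt_last: "srt xs \<Longrightarrow> v \<in> set xs \<Longrightarrow> vidx v \<le> lastidx xs"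
  unfolding srt_def lastidx_def
proof (induction xs rule: rev_induct)
  case Nil then show ?case by simp
next
  case (snoc x xs)
  then show ?case by (auto simp: sorted_wrt_append less_imp_le)
qed

lemma srt_in_prefix:
  assumes "srt F" "prefix C F" "w \<in> set F" "0 < vidx w" "vidx w \<le> lastidx C"
  shows "w \<in> set C"
proof -
  obtain D where F: "F = C @ D" using assms(2) by (auto elim: prefixE)
  have C: "C \<noteq> []" using assms(4,5) by (auto simp: lastidx_def)
  show ?thesis
  proof (rule ccontr)
    assume "w \<notin> set C"
    then have "w \<in> set D" using assms(3) F by auto
    moreover have "last C \<in> set C" using C by simp
    ultimately have "vidx (last C) < vidx w" using assms(1) F unfolding srt_def
      by (auto simp: sorted_wrt_append)
    then show False using assms(5) C by (simp add: lastidx_def)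
  qed
qed

lemma invD:
  assumes "inv cf \<sigma>"
  shows inv1: "prefix (committed \<sigma> (d,p,r)) (glog \<sigma> d p)"
    and inv4: "b < nD cf \<Longrightarrow> b \<noteq> a \<Longrightarrow>
        fl a (glog \<sigma> b p) @ chan \<sigma> a b p = fl a (committed \<sigma> (a,p,ldr cf a p))"
    and inv5: "nD cf \<le> b \<or> b = a \<Longrightarrow> chan \<sigma> a b p = []"
    and inv6: "srt (fl i (glog \<sigma> i p))"
    and inv8: "u\<in>set (glog \<sigma> i p) \<Longrightarrow> vdc u = i \<Longrightarrow> vidx u \<le> length (glog \<sigma> i p)"
    and inv7: "sv \<sigma> s i = lastidx (fl i (committed \<sigma> s))"
    and inv9: "w\<in>set (cwrites \<sigma> c) \<Longrightarrow> w \<in> set (glog \<sigma> (vdc w) (pk cf (vkey w))) \<and> 0 < vidx w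
        \<and> vidx w \<le> hwm \<sigma> c (vdc w) (pk cf (vkey w)) \<and> vdc w < nD cf"
    and inv10: "(c,v)\<in>pputs \<sigma> \<Longrightarrow> v \<in> set (glog \<sigma> (vdc v) (pk cf (vkey v))) \<and> 0 < vidx v \<and> vdc v < nD cf"
  using assms unfolding inv_def by ((elim conjE), (simp only: Ball_def split_paired_All), blast+)

lemma inv_committed_prefix:
  assumes "inv cf \<sigma>" "d < nD cf"
  shows "prefix (fl i (committed \<sigma> (d,p,r))) (fl i (glog \<sigma> i p))"
proof (cases "d = i")
  case True
  then show ?thesis using inv1[OF assms(1)] unfolding fl_def by (auto intro: filter_mono_prefix)
next
  case False
  have "prefix (fl i (committed \<sigma> (d,p,r))) (fl i (glog \<sigma> d p))"
    using inv1[OF assms(1)] unfolding fl_def by (auto intro: filter_mono_prefix)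
  also have "prefix (fl i (glog \<sigma> d p)) (fl i (committed \<sigma> (i,p,ldr cf i p)))"
    using inv4[OF assms(1) assms(2) False] by (metis prefixI)
  also have "prefix (fl i (committed \<sigma> (i,p,ldr cf i p))) (fl i (glog \<sigma> i p))"
    using inv1[OF assms(1)] unfolding fl_def by (auto intro: filter_mono_prefix)
  finally show ?thesis .
qed

lemma invI:
  assumes "\<And>d p r. prefix (committed \<sigma> (d,p,r)) (glog \<sigma> d p)"
    and "\<And>a b p. b < nD cf \<Longrightarrow> b \<noteq> a \<Longrightarrow>
        fl a (glog \<sigma> b p) @ chan \<sigma> a b p = fl a (committed \<sigma> (a,p,ldr cf a p))"
    and "\<And>a b p. nD cf \<le> b \<or> b = a \<Longrightarrow> chan \<sigma> a b p = []"
    and "\<And>i p. srt (fl i (glog \<sigma> i p))"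
    and "\<And>i p u. u\<in>set (glog \<sigma> i p) \<Longrightarrow> vdc u = i \<Longrightarrow> vidx u \<le> length (glog \<sigma> i p)"
    and "\<And>s i. sv \<sigma> s i = lastidx (fl i (committed \<sigma> s))"
    and "\<And>w c. w\<in>set (cwrites \<sigma> c) \<Longrightarrow> w \<in> set (glog \<sigma> (vdc w) (pk cf (vkey w))) \<and> 0 < vidx w
        \<and> vidx w \<le> hwm \<sigma> c (vdc w) (pk cf (vkey w)) \<and> vdc w < nD cf"
    and "\<And>c v. (c,v)\<in>pputs \<sigma> \<Longrightarrow> v \<in> set (glog \<sigma> (vdc v) (pk cf (vkey v))) \<and> 0 < vidx v \<and> vdc v < nD cf"
  shows "inv cf \<sigma>"
  unfolding inv_def
  apply (intro conjI)
  subgoal using assms(1) by blast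
  subgoal using assms(2) by blast
  subgoal using assms(3) by blast
  subgoal using assms(4) by blast
  subgoal using assms(5) by blast
  subgoal using assms(6) by blast
  subgoal using assms(7) by blast
  subgoal using assms(8) by auto
  done

lemma inv_put:
  assumes I: "inv cf \<sigma>" and dn: "d < nD cf" and pp: "p = pk cf k"
    and vv: "v = \<lparr> vkey = k, vval = x, vdc = d, vidx = Suc (length (glog \<sigma> d p)), vts = ts \<rparr>"
  shows "inv cf (\<sigma>\<lparr> glog := (glog \<sigma>)(d := (glog \<sigma> d)(p := glog \<sigma> d p @ [v])),
                  lhlc := LL,
                  pputs := insert (c, v) (pputs \<sigma>) \<rparr>)" (is "inv cf ?s")
proof -
  have gl: "\<And>a b. glog ?s a b = (if a = d \<and> b = p then glog \<sigma> d p @ [v] else glog \<sigma> a b)"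
    by simp
  have vd: "vdc v = d" "vkey v = k" "vidx v = Suc (length (glog \<sigma> d p))" using vv by simp_all
  have sub: "\<And>a b. set (glog \<sigma> a b) \<subseteq> set (glog ?s a b)" by (auto simp: gl)
  show ?thesis
  proof (rule invI)
    fix a b q r
    show "prefix (committed ?s (a,q,r)) (glog ?s a q)" using inv1[OF I] by (simp add: gl)
  next
    fix a b q
    assume "b < nD cf" "b \<noteq> a"
    then show "fl a (glog ?s b q) @ chan ?s a b q = fl a (committed ?s (a,q,ldr cf a q))"
      using inv4[OF I] by (auto simp: gl vd)
  next
    fix a b q
    assume "nD cf \<le> b \<or> b = a"
    then show "chan ?s a b q = []" using inv5[OF I] by simp
  next
    fix i q
    show "srt (fl i (glog ?s i q))"
    proof (cases "i = d \<and> q = p")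
      case True
      have "srt (fl d (glog \<sigma> d p) @ [v])"
        using inv6[OF I, of d p] inv8[OF I, of _ d p] vd unfolding srt_def
        by (fastforce simp: sorted_wrt_append)
      then show ?thesis using True by (simp add: gl vd)
    qed (use inv6[OF I] gl in auto)
  next
    fix i q u
    assume "u\<in>set (glog ?s i q)" "vdc u = i"
    then show "vidx u \<le> length (glog ?s i q)"
      using inv8[OF I, of u i q] vd by (auto simp: gl split: if_splits)
  next
    fix s i show "sv ?s s i = lastidx (fl i (committed ?s s))" using inv7[OF I] by simp
  next
    fix w c' assume "w\<in>set (cwrites ?s c')"
    then show "w \<in> set (glog ?s (vdc w) (pk cf (vkey w))) \<and> 0 < vidx w
        \<and> vidx w \<le> hwm ?s c' (vdc w) (pk cf (vkey w)) \<and> vdc w < nD cf"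
      using inv9[OF I, of w c'] sub by auto
  next
    fix c' u assume "(c',u)\<in>pputs ?s"
    then show "u \<in> set (glog ?s (vdc u) (pk cf (vkey u))) \<and> 0 < vidx u \<and> vdc u < nD cf"
      using inv10[OF I, of c' u] sub vd dn pp by (auto simp: gl)
  qed
qed

lemma inv_cong:
  assumes "inv cf \<sigma>" "glog \<sigma>' = glog \<sigma>" "committed \<sigma>' = committed \<sigma>" "sv \<sigma>' = sv \<sigma>"
    "chan \<sigma>' = chan \<sigma>" "hwm \<sigma>' = hwm \<sigma>" "cwrites \<sigma>' = cwrites \<sigma>" "pputs \<sigma>' = pputs \<sigma>"
  shows "inv cf \<sigma>'"
  using assms(1) unfolding inv_def assms(2-8) .

lemma inv_putdone:
  assumes I: "inv cf \<sigma>" and cv: "(c, v) \<in> pputs \<sigma>" and dd: "d = vdc v" and pp: "p = pk cf (vkey v)"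
    and LL: "L = (d, p, ldr cf d p)" and vL: "v \<in> set (committed \<sigma> L)"
  shows "inv cf (\<sigma>\<lparr> hwm := (hwm \<sigma>)(c := (hwm \<sigma> c)(d := (hwm \<sigma> c d)(p := max (hwm \<sigma> c d p) (sv \<sigma> L d)))),
                  dtw := X,
                  cwrites := (cwrites \<sigma>)(c := cwrites \<sigma> c @ [v]),
                  pputs := pputs \<sigma> - {(c, v)} \<rparr>)" (is "inv cf ?s")
proof -
  have dn: "d < nD cf" using inv10[OF I cv] dd by simp
  have "srt (fl d (committed \<sigma> L))"
    using srt_prefix[OF inv6[OF I] inv_committed_prefix[OF I dn]] LL by simp
  then have "vidx v \<le> sv \<sigma> L d" using vL dd inv7[OF I, of L d] srt_last by fastforce
  then have hv: "vidx v \<le> hwm ?s c d p" by simp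
  have mono: "\<And>c' a b. hwm \<sigma> c' a b \<le> hwm ?s c' a b" by simp
  show ?thesis
  proof (rule invI)
    fix a q r
    show "prefix (committed ?s (a,q,r)) (glog ?s a q)" using inv1[OF I] by simp
  next
    fix a b q
    assume "b < nD cf" "b \<noteq> a"
    then show "fl a (glog ?s b q) @ chan ?s a b q = fl a (committed ?s (a,q,ldr cf a q))"
      using inv4[OF I] by simp
  next
    fix a b q
    assume "nD cf \<le> b \<or> b = a"
    then show "chan ?s a b q = []" using inv5[OF I] by simp
  next
    fix i q
    show "srt (fl i (glog ?s i q))" using inv6[OF I] by simp
  next
    fix i q u
    assume "u\<in>set (glog ?s i q)" "vdc u = i"
    then show "vidx u \<le> length (glog ?s i q)" using inv8[OF I] by simp
  next
    fix s i show "sv ?s s i = lastidx (fl i (committed ?s s))" using inv7[OF I] by simp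
  next
    fix w c' assume w: "w\<in>set (cwrites ?s c')"
    show "w \<in> set (glog ?s (vdc w) (pk cf (vkey w))) \<and> 0 < vidx w
        \<and> vidx w \<le> hwm ?s c' (vdc w) (pk cf (vkey w)) \<and> vdc w < nD cf"
    proof (cases "w \<in> set (cwrites \<sigma> c')")
      case True
      then show ?thesis using inv9[OF I, of w c'] mono[of c' "vdc w" "pk cf (vkey w)"] by auto
    next
      case False
      then have "c' = c" "w = v" using w by (auto split: if_splits)
      then show ?thesis using inv10[OF I cv] hv dd pp by simp
    qed
  next
    fix c' u assume "(c',u)\<in>pputs ?s"
    then show "u \<in> set (glog ?s (vdc u) (pk cf (vkey u))) \<and> 0 < vidx u \<and> vdc u < nD cf"
      using inv10[OF I, of c' u] by auto
  qed
qed

lemma prefix_snoc_nth: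
  assumes "prefix xs ys" "length xs < length ys"
  shows "prefix (xs @ [ys ! length xs]) ys"
proof -
  obtain zs where ys: "ys = xs @ zs" using assms(1) by (auto elim: prefixE)
  then obtain z zs' where "zs = z # zs'" using assms(2) by (cases zs) auto
  then show ?thesis using ys by simp
qed

lemma inv_commit:
  assumes I: "inv cf \<sigma>" and ss: "s = (d, p, r)" and dn: "d < nD cf"
    and len: "length (committed \<sigma> s) < length (glog \<sigma> d p)"
    and vv: "v = glog \<sigma> d p ! length (committed \<sigma> s)"
  shows "inv cf (\<sigma>\<lparr> committed := (committed \<sigma>)(s := committed \<sigma> s @ [v]),
                  sv := (sv \<sigma>)(s := (sv \<sigma> s)(vdc v := vidx v)),
                  chan := (if r = ldr cf d p \<and> vdc v = d
                           then (\<lambda>a b q. if a = d \<and> b < nD cf \<and> b \<noteq> d \<and> q = p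
                                         then chan \<sigma> a b q @ [v] else chan \<sigma> a b q)
                           else chan \<sigma>) \<rparr>)" (is "inv cf ?s")
proof (rule invI)
  fix a q r'
  show "prefix (committed ?s (a,q,r')) (glog ?s a q)"
    using inv1[OF I, of a q r'] prefix_snoc_nth[OF inv1[OF I, of d p r]] len vv ss by auto
next
  fix a b q
  assume ab: "b < nD cf" "b \<noteq> a"
  show "fl a (glog ?s b q) @ chan ?s a b q = fl a (committed ?s (a,q,ldr cf a q))"
  proof (cases "a = d \<and> q = p \<and> r = ldr cf d p")
    case True
    then show ?thesis using inv4[OF I ab, of q] ab ss by auto
  next
    case False
    then show ?thesis using inv4[OF I ab, of q] ab ss by auto
  qed
next
  fix a b q
  assume "nD cf \<le> b \<or> b = a"
  then show "chan ?s a b q = []" using inv5[OF I] by auto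
next
  fix i q
  show "srt (fl i (glog ?s i q))" using inv6[OF I] by simp
next
  fix i q u
  assume "u\<in>set (glog ?s i q)" "vdc u = i"
  then show "vidx u \<le> length (glog ?s i q)" using inv8[OF I] by simp
next
  fix s' i show "sv ?s s' i = lastidx (fl i (committed ?s s'))"
    using inv7[OF I, of s' i] by (auto simp: lastidx_def)
next
  fix w c' assume "w\<in>set (cwrites ?s c')"
  then show "w \<in> set (glog ?s (vdc w) (pk cf (vkey w))) \<and> 0 < vidx w
      \<and> vidx w \<le> hwm ?s c' (vdc w) (pk cf (vkey w)) \<and> vdc w < nD cf"
    using inv9[OF I, of w c'] by simp
next
  fix c' u assume "(c',u)\<in>pputs ?s"
  then show "u \<in> set (glog ?s (vdc u) (pk cf (vkey u))) \<and> 0 < vidx u \<and> vdc u < nD cf"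
    using inv10[OF I, of c' u] by simp
qed

lemma inv_recv:
  assumes I: "inv cf \<sigma>" and ch: "chan \<sigma> a b p = v # rest"
  shows "inv cf (\<sigma>\<lparr> chan := (chan \<sigma>)(a := (chan \<sigma> a)(b := (chan \<sigma> a b)(p := rest))),
                  glog := (glog \<sigma>)(b := (glog \<sigma> b)(p := glog \<sigma> b p @ [v])) \<rparr>)" (is "inv cf ?s")
proof -
  have ab: "b < nD cf" "b \<noteq> a"
  proof -
    have "\<not> (nD cf \<le> b \<or> b = a)" using inv5[OF I] ch by (metis list.distinct(1))
    then show "b < nD cf" "b \<noteq> a" by auto
  qed
  have va: "vdc v = a"
  proof -
    have "v \<in> set (fl a (committed \<sigma> (a,p,ldr cf a p)))"
      using inv4[OF I ab, of p] ch by (metis list.set_intros(1) UnI2 set_append)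
    then show ?thesis by simp
  qed
  have gl: "\<And>x y. glog ?s x y = (if x = b \<and> y = p then glog \<sigma> b p @ [v] else glog \<sigma> x y)"
    by simp
  have sub: "\<And>x y. set (glog \<sigma> x y) \<subseteq> set (glog ?s x y)" by (auto simp: gl)
  show ?thesis
  proof (rule invI)
    fix x q r
    show "prefix (committed ?s (x,q,r)) (glog ?s x q)" using inv1[OF I] by (simp add: gl)
  next
    fix x y q
    assume xy: "y < nD cf" "y \<noteq> x"
    show "fl x (glog ?s y q) @ chan ?s x y q = fl x (committed ?s (x,q,ldr cf x q))"
    proof (cases "y = b \<and> q = p")
      case True
      then show ?thesis using inv4[OF I xy, of q] ch va by (auto simp: gl)
    next
      case False
      then show ?thesis using inv4[OF I xy, of q] by (auto simp: gl)
    qed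
  next
    fix x y q
    assume "nD cf \<le> y \<or> y = x"
    then show "chan ?s x y q = []" using inv5[OF I] ab by auto
  next
    fix i q
    show "srt (fl i (glog ?s i q))" using inv6[OF I, of i q] va ab by (auto simp: gl)
  next
    fix i q u
    assume "u\<in>set (glog ?s i q)" "vdc u = i"
    then show "vidx u \<le> length (glog ?s i q)"
      using inv8[OF I, of u i q] va ab by (auto simp: gl split: if_splits)
  next
    fix s i show "sv ?s s i = lastidx (fl i (committed ?s s))" using inv7[OF I] by simp
  next
    fix w c' assume "w\<in>set (cwrites ?s c')"
    then show "w \<in> set (glog ?s (vdc w) (pk cf (vkey w))) \<and> 0 < vidx w
        \<and> vidx w \<le> hwm ?s c' (vdc w) (pk cf (vkey w)) \<and> vdc w < nD cf"
      using inv9[OF I, of w c'] sub by auto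
  next
    fix c' u assume "(c',u)\<in>pputs ?s"
    then show "u \<in> set (glog ?s (vdc u) (pk cf (vkey u))) \<and> 0 < vidx u \<and> vdc u < nD cf"
      using inv10[OF I, of c' u] sub by auto
  qed
qed

lemma inv_step:
  assumes "step cf \<sigma> e \<sigma>'" "inv cf \<sigma>"
  shows "inv cf \<sigma>'"
  using assms(1)
proof (cases rule: step.cases)
  case skip then show ?thesis using assms(2) by simp
next
  case (put d p k dt c ts pt v x)
  then show ?thesis using inv_put[OF assms(2)] by simp
next
  case (putdone c v d p L)
  then show ?thesis using inv_putdone[OF assms(2)] by simp
next
  case (commit s d p r v)
  then show ?thesis using inv_commit[OF assms(2)] by simp
next
  case (recv a b p v rest)
  then show ?thesis using inv_recv[OF assms(2)] by simp
next
  case getreq then show ?thesis using assms(2) by (auto intro: inv_cong)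
next
  case getserve_none then show ?thesis using assms(2) by (auto intro: inv_cong)
next
  case getserve_some then show ?thesis using assms(2) by (auto intro: inv_cong)
qed

lemma exec_inv:
  assumes "exec cf \<sigma> evs" shows "inv cf (\<sigma> n)"
proof (induction n)
  case 0 then show ?case using assms inv_init by (simp add: exec_def)
next
  case (Suc n) then show ?case using assms inv_step by (metis exec_def)
qed

lemma step_glog_mono:
  assumes "step cf \<sigma> e \<sigma>'" shows "set (glog \<sigma> x y) \<subseteq> set (glog \<sigma>' x y)"
  using assms by (cases rule: step.cases) auto

lemma exec_glog_mono:
  assumes "exec cf \<sigma> evs" "n \<le> m" shows "set (glog (\<sigma> n) x y) \<subseteq> set (glog (\<sigma> m) x y)"
  using assms(2)
proof (induction m rule: dec_induct)
  case base then show ?case by simp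
next
  case (step m)
  then show ?case using step_glog_mono[of cf "\<sigma> m" "evs m" "\<sigma> (Suc m)" x y] assms(1)
    unfolding exec_def by blast
qed

lemma step_pending:
  assumes "step cf \<sigma> e \<sigma>'" "rid \<in> used \<sigma>"
    "pgets \<sigma> rid = None \<or> pgets \<sigma> rid = Some X"
  shows "rid \<in> used \<sigma>' \<and> (pgets \<sigma>' rid = None \<or> pgets \<sigma>' rid = Some X)"
  using assms(1)
proof (cases rule: step.cases)
  case (getreq s d p r k hrv c hwv rid')
  then show ?thesis using assms(2,3) by auto
qed (use assms(2,3) in auto)

lemma exec_pending:
  assumes "exec cf \<sigma> evs" "evs t = GetReq c s k hrv hwv rid" "Suc t \<le> n"
  shows "rid \<in> used (\<sigma> n) \<and> (pgets (\<sigma> n) rid = None \<or> pgets (\<sigma> n) rid = Some (c, s, k, hrv, hwv))"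
  using assms(3)
proof (induction n rule: dec_induct)
  case base
  have "step cf (\<sigma> t) (GetReq c s k hrv hwv rid) (\<sigma> (Suc t))"
    using assms(1,2) unfolding exec_def by metis
  then show ?case by (cases rule: step.cases) auto
next
  case (step m)
  then show ?case using step_pending[of cf "\<sigma> m" "evs m" "\<sigma> (Suc m)" rid] assms(1)
    unfolding exec_def by blast
qed

theorem mainTheorem3:
  fixes cf :: "'k config" and \<sigma> :: "nat \<Rightarrow> ('c, 'k, 'v) sstate"
    and evs :: "nat \<Rightarrow> ('c, 'k, 'v) event"
  assumes "exec cf \<sigma> evs"
    and "\<forall>k. pk cf k < nP cf"
    and "\<forall>d p. ldr cf d p < nR cf"
    and "evs t = GetReq c s k hrv hwv rid"
    and "hwv = (\<lambda>i. hwm (\<sigma> t) c i (pk cf k))"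
    and "t < t'"
    and "evs t' = GetServe rid vo"
  shows "set (ClientWrites \<sigma> c k t) \<subseteq> set (CommittedWrites \<sigma> s k t')"
proof
  fix w assume "w \<in> set (ClientWrites \<sigma> c k t)"
  then have wc: "w \<in> set (cwrites (\<sigma> t) c)" and wk: "vkey w = k" by (auto simp: ClientWrites_def)
  have It: "inv cf (\<sigma> t)" and It': "inv cf (\<sigma> t')" using exec_inv[OF assms(1)] by auto
  have sreq: "step cf (\<sigma> t) (GetReq c s k hrv hwv rid) (\<sigma> (Suc t))"
    using assms(1,4) unfolding exec_def by metis
  then obtain ds p r where sdef: "s = (ds, p, r)" "ds < nD cf" "p = pk cf k"
    by (cases rule: step.cases) auto
  have pend: "pgets (\<sigma> t') rid = None \<or> pgets (\<sigma> t') rid = Some (c, s, k, hrv, hwv)"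
    using exec_pending[OF assms(1,4)] assms(6) by auto
  have sserve: "step cf (\<sigma> t') (GetServe rid vo) (\<sigma> (Suc t'))"
    using assms(1,7) unfolding exec_def by metis
  have cond: "\<forall>i < nD cf. hwv i \<le> sv (\<sigma> t') s i"
    using sserve
  proof (cases rule: step.cases)
    case (getserve_none c' s' k' hrv' hwv')
    then show ?thesis using pend by auto
  next
    case (getserve_some c' s' k' hrv' hwv' v p)
    then show ?thesis using pend by auto
  qed
  define d where "d = vdc w"
  have w9: "w \<in> set (glog (\<sigma> t) d p)" "0 < vidx w" "vidx w \<le> hwv d" "d < nD cf"
    using inv9[OF It wc] wk assms(5) sdef d_def by auto
  have wg: "w \<in> set (glog (\<sigma> t') d p)"
    using exec_glog_mono[OF assms(1), of t t' d p] assms(6) w9(1) by auto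
  have le: "vidx w \<le> lastidx (fl d (committed (\<sigma> t') s))"
    using cond w9 inv7[OF It', of s d] by auto
  have pre: "prefix (fl d (committed (\<sigma> t') s)) (fl d (glog (\<sigma> t') d p))"
    using inv_committed_prefix[OF It' sdef(2)] sdef(1) by simp
  have "w \<in> set (fl d (committed (\<sigma> t') s))"
    using srt_in_prefix[OF inv6[OF It'] pre] wg d_def w9(2) le by simp
  then show "w \<in> set (CommittedWrites \<sigma> s k t')"
    using wk by (simp add: CommittedWrites_def)
qed

end
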